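(* For integer exponents $j$ of powers $w^j$ of factors $w$ occurring in a 3iet word $u_{\varepsilon,\ell}$ we have $$ j\leq 2+ \sup_{n\in\mathbb N} a_n\,, $$ where $\varepsilon=[0,a_1,a_2,\dots]$ is the continued fraction expansion of $\varepsilon$.
   Context: Parameters $\varepsilon,\ell$ satisfy $\varepsilon\in(0,1)\setminus\mathbb Q$ and $\max\{\varepsilon,1-\varepsilon\}<\ell<1$. The three interval exchange $T_{\varepsilon,\ell}:[0,\ell)\to[0,\ell)$ is defined by $T_{\varepsilon,\ell}(x)=x+1-\varepsilon$ for $x\in I_A:=[0,\ell-1+\varepsilon)$, $T_{\varepsilon,\ell}(x)=x+1-2\varepsilon$ for $x\in I_B:=[\ell-1+\varepsilon,\varepsilon)$, and $T_{\varepsilon,\ell}(x)=x-\varepsilon$ for $x\in I_C:=[\varepsilon,\ell)$. A 3iet word $u_{\varepsilon,\ell}$ with parameters $\varepsilon,\ell$ is the word $(u_n)_{n\in\mathbb N}$ over $\{A,B,C\}$ with $u_n=X$ iff $T_{\varepsilon,\ell}^n(x_0)\in I_X$, for some $x_0\in[0,\ell)$. For an integer $j$, $w^j$ denotes the concatenation of $j$ copies of $w$. *)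

theory Defs
  imports Complex_Main "HOL-Library.Extended_Real"
begin

datatype letter = A | B | C

definition T3 :: "real \<Rightarrow> real \<Rightarrow> real \<Rightarrow> real" where
  "T3 e l x =
     (if x < l - 1 + e then x + 1 - e
      else if x < e then x + 1 - 2 * e
      else x - e)"

definition letter_of :: "real \<Rightarrow> real \<Rightarrow> real \<Rightarrow> letter" where
  "letter_of e l x =
     (if 0 \<le> x \<and> x < l - 1 + e then A
      else if l - 1 + e \<le> x \<and> x < e then B
      else C)"

definition iet_word :: "real \<Rightarrow> real \<Rightarrow> real \<Rightarrow> nat \<Rightarrow> letter" where
  "iet_word e l x0 n = letter_of e l ((T3 e l ^^ n) x0)"

fun cf_rem :: "real \<Rightarrow> nat \<Rightarrow> real" where
  "cf_rem x 0 = x"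
| "cf_rem x (Suc n) = frac (1 / cf_rem x n)"

text \<open>Partial quotients: x = [0; a_1, a_2, ...] for x in (0,1) irrational.\<close>
definition cf_quot :: "real \<Rightarrow> nat \<Rightarrow> int" where
  "cf_quot x n = (if n = 0 then \<lfloor>x\<rfloor> else \<lfloor>1 / cf_rem x (n - 1)\<rfloor>)"

definition power_word :: "'a list \<Rightarrow> nat \<Rightarrow> 'a list" where
  "power_word w j = concat (replicate j w)"

definition is_factor :: "'a list \<Rightarrow> (nat \<Rightarrow> 'a) \<Rightarrow> bool" where
  "is_factor v u \<longleftrightarrow> (\<exists>k. \<forall>i < length v. u (k + i) = v ! i)"

end

theory Submission
  imports Defs
begin


lemma rem_props:
  assumes "0 < e" "e < 1" "e \<notin> \<rat>"
  shows "0 < cf_rem e k \<and> cf_rem e k < 1 \<and> cf_rem e k \<notin> \<rat>"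
proof (induction k)
  case 0 then show ?case using assms by simp
next
  case (Suc k)
  define r where "r = cf_rem e k"
  have r: "0 < r" "r < 1" "r \<notin> \<rat>" using Suc r_def by auto
  have i: "1 / r \<notin> \<rat>"
  proof
    assume "1 / r \<in> \<rat>"
    then have "1 / (1 / r) \<in> \<rat>" by (rule Rats_divide[OF Rats_1])
    then show False using r by simp
  qed
  have f: "frac (1/r) = 1/r - of_int \<lfloor>1/r\<rfloor>" by (simp add: frac_def)
  have fi: "frac (1/r) \<notin> \<rat>"
  proof
    assume "frac (1/r) \<in> \<rat>"
    then have "frac (1/r) + of_int \<lfloor>1/r\<rfloor> \<in> \<rat>" by (intro Rats_add) auto
    then show False using i f by simp
  qed
  have "frac (1/r) \<noteq> 0" using fi by (metis Rats_0)
  then have "0 < frac (1/r)" using frac_ge_0[of "1/r"] by linarith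
  moreover have "frac (1/r) < 1" by (rule frac_lt_1)
  ultimately show ?case using fi by (simp add: r_def)
qed

lemma inv_eq:
  assumes "0 < e" "e < 1" "e \<notin> \<rat>"
  shows "1 / cf_rem e k = of_int (cf_quot e (Suc k)) + cf_rem e (Suc k)"
  by (simp add: cf_quot_def frac_def)

lemma quot_pos:
  assumes "0 < e" "e < 1" "e \<notin> \<rat>"
  shows "1 \<le> cf_quot e (Suc k)"
proof -
  have "0 < cf_rem e k" "cf_rem e k < 1" using rem_props[OF assms] by auto
  then have "1 < 1 / cf_rem e k" by simp
  then show ?thesis by (simp add: cf_quot_def)
qed

fun qq :: "real \<Rightarrow> nat \<Rightarrow> int" where
  "qq e 0 = 0" | "qq e (Suc 0) = 1"
| "qq e (Suc (Suc k)) = cf_quot e (Suc k) * qq e (Suc k) + qq e k"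

fun pp :: "real \<Rightarrow> nat \<Rightarrow> int" where
  "pp e 0 = 1" | "pp e (Suc 0) = 0"
| "pp e (Suc (Suc k)) = cf_quot e (Suc k) * pp e (Suc k) + pp e k"

definition PP :: "real \<Rightarrow> nat \<Rightarrow> real" where
  "PP e k = (\<Prod>i<k. cf_rem e i)"

lemma PP_pos:
  assumes "0 < e" "e < 1" "e \<notin> \<rat>"
  shows "0 < PP e k"
  unfolding PP_def using rem_props[OF assms] by (intro prod_pos) auto

lemma D_eq:
  assumes "0 < e" "e < 1" "e \<notin> \<rat>"
  shows "of_int (qq e k) * e - of_int (pp e k) = (-1)^(k+1) * PP e k
       \<and> of_int (qq e (Suc k)) * e - of_int (pp e (Suc k)) = (-1)^(k+2) * PP e (Suc k)"
proof (induction k)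
  case 0 then show ?case by (simp add: PP_def)
next
  case (Suc k)
  let ?a = "real_of_int (cf_quot e (Suc k))"
  have h1: "of_int (qq e k) * e - of_int (pp e k) = (-1)^(k+1) * PP e k" using Suc by blast
  have h2: "of_int (qq e (Suc k)) * e - of_int (pp e (Suc k)) = (-1)^(k+2) * PP e (Suc k)" using Suc by blast
  have r: "0 < cf_rem e k" using rem_props[OF assms] by blast
  have inv: "1 / cf_rem e k = ?a + cf_rem e (Suc k)" by (rule inv_eq[OF assms])
  have P1: "PP e (Suc k) = PP e k * cf_rem e k" by (simp add: PP_def)
  have P2: "PP e (Suc (Suc k)) = PP e k * cf_rem e k * cf_rem e (Suc k)" by (simp add: PP_def)
  have key: "?a * PP e (Suc k) - PP e k = - PP e (Suc (Suc k))"
  proof -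
    have "PP e k = PP e k * cf_rem e k * (1 / cf_rem e k)" using r by simp
    also have "\<dots> = PP e (Suc k) * (?a + cf_rem e (Suc k))" using inv P1 by simp
    finally show ?thesis using P1 P2 by (simp add: algebra_simps)
  qed
  have "of_int (qq e (Suc (Suc k))) * e - of_int (pp e (Suc (Suc k)))
      = ?a * (of_int (qq e (Suc k)) * e - of_int (pp e (Suc k))) + (of_int (qq e k) * e - of_int (pp e k))"
    by (simp add: algebra_simps)
  also have "\<dots> = (-1)^(k+2) * (?a * PP e (Suc k) - PP e k)" using h1 h2 by (simp add: algebra_simps)
  also have "\<dots> = (-1)^(Suc k + 2) * PP e (Suc (Suc k))" using key by simp
  finally show ?case using h2 by simp
qed

lemma qq_props:
  assumes "0 < e" "e < 1" "e \<notin> \<rat>"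
  shows "0 \<le> qq e k \<and> qq e k \<le> qq e (Suc k) \<and> 1 \<le> qq e (Suc k) \<and> int k \<le> qq e (Suc (Suc k)) + 1"
proof (induction k)
  case 0 then show ?case using quot_pos[OF assms, of 0] by simp
next
  case (Suc k)
  have a: "1 \<le> cf_quot e (Suc k)" "1 \<le> cf_quot e (Suc (Suc k))" by (rule quot_pos[OF assms])+
  have e2: "qq e (Suc (Suc k)) = cf_quot e (Suc k) * qq e (Suc k) + qq e k" by simp
  have e3: "qq e (Suc (Suc (Suc k))) = cf_quot e (Suc (Suc k)) * qq e (Suc (Suc k)) + qq e (Suc k)" by simp
  have m1: "qq e (Suc k) \<le> cf_quot e (Suc k) * qq e (Suc k)"
    using mult_right_mono[of 1 "cf_quot e (Suc k)" "qq e (Suc k)"] a Suc by simp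
  have q2: "qq e (Suc k) \<le> qq e (Suc (Suc k))" using e2 m1 Suc by linarith
  have m2: "qq e (Suc (Suc k)) \<le> cf_quot e (Suc (Suc k)) * qq e (Suc (Suc k))"
    using mult_right_mono[of 1 "cf_quot e (Suc (Suc k))" "qq e (Suc (Suc k))"] a Suc q2 by simp
  show ?case using Suc q2 m2 e3 by linarith
qed

lemma det:
  shows "pp e (Suc k) * qq e k - pp e k * qq e (Suc k) = (-1)^(k+1)"
proof (induction k)
  case 0 then show ?case by simp
next
  case (Suc k)
  then show ?case by (simp add: algebra_simps)
qed



lemma sign_arg:
  fixes u v n Q1 Q2 :: int and P1 P2 :: real
  assumes "0 \<le> Q1" "1 \<le> Q2" "0 < P1" "0 < P2" "1 \<le> n" "n < Q2" "n = u * Q1 + v * Q2"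
  shows "P1 \<le> \<bar>real_of_int u * P1 - real_of_int v * P2\<bar>"
proof -
  have "u \<noteq> 0"
  proof
    assume "u = 0"
    then have "n = v * Q2" using assms by simp
    show False
    proof (cases "v \<le> 0")
      case True
      then have "v * Q2 \<le> 0" using assms by (simp add: mult_nonpos_nonneg)
      then show False using \<open>n = v * Q2\<close> assms by linarith
    next
      case False
      then have "Q2 \<le> v * Q2" using assms by (simp add: mult_le_cancel_right1)
      then show False using \<open>n = v * Q2\<close> assms by linarith
    qed
  qed
  then consider "u \<ge> 1" | "u \<le> -1" by linarith
  then show ?thesis
  proof cases
    case 1
    have "v \<le> 0"
    proof (rule ccontr)
      assume "\<not> v \<le> 0"
      then have "Q2 \<le> v * Q2" using assms by (simp add: mult_le_cancel_right1)
      moreover have "0 \<le> u * Q1" using 1 assms by simp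
      ultimately show False using assms by linarith
    qed
    have "P1 \<le> real_of_int u * P1" using 1 assms mult_right_mono[of 1 "real_of_int u" P1] by simp
    moreover have "real_of_int v * P2 \<le> 0" using \<open>v \<le> 0\<close> assms by (simp add: mult_nonpos_nonneg)
    ultimately show ?thesis by linarith
  next
    case 2
    have "v \<ge> 1"
    proof (rule ccontr)
      assume "\<not> v \<ge> 1"
      then have "v * Q2 \<le> 0" using assms by (simp add: mult_nonpos_nonneg)
      moreover have "u * Q1 \<le> 0" using 2 assms by (simp add: mult_nonpos_nonneg)
      ultimately show False using assms by linarith
    qed
    have "real_of_int u * P1 \<le> - P1" using 2 assms mult_right_mono[of "real_of_int u" "-1" P1] by simp
    moreover have "0 \<le> real_of_int v * P2" using \<open>v \<ge> 1\<close> assms by simp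
    ultimately show ?thesis by linarith
  qed
qed

lemma best_approx:
  assumes "0 < e" "e < 1" "e \<notin> \<rat>" and n: "1 \<le> n" "n < qq e (Suc (Suc k))"
  shows "PP e (Suc k) \<le> \<bar>of_int n * e - of_int m\<bar>"
proof -
  define c :: int where "c = (-1)^k"
  define Q1 where "Q1 = qq e (Suc k)"
  define Q2 where "Q2 = qq e (Suc (Suc k))"
  define p1 where "p1 = pp e (Suc k)"
  define p2 where "p2 = pp e (Suc (Suc k))"
  have cc: "c * c = 1" unfolding c_def by (simp add: power_mult_distrib[symmetric])
  have dt: "p2 * Q1 - p1 * Q2 = c" using det[of e "Suc k"] unfolding c_def p1_def p2_def Q1_def Q2_def by simp
  define u0 where "u0 = n * p2 - m * Q2"
  define v0 where "v0 = m * Q1 - n * p1"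
  have "u0 * Q1 + v0 * Q2 = n * (p2 * Q1 - p1 * Q2)" unfolding u0_def v0_def by (simp add: algebra_simps)
  then have hn: "u0 * Q1 + v0 * Q2 = c * n" using dt by simp
  have "u0 * p1 + v0 * p2 = m * (p2 * Q1 - p1 * Q2)" unfolding u0_def v0_def by (simp add: algebra_simps)
  then have hm: "u0 * p1 + v0 * p2 = c * m" using dt by simp
  have D: "of_int Q1 * e - of_int p1 = (-1)^k * PP e (Suc k)"
          "of_int Q2 * e - of_int p2 = - ((-1)^k * PP e (Suc (Suc k)))"
    using D_eq[OF assms(1-3), of "Suc k"] unfolding Q1_def Q2_def p1_def p2_def by auto
  have cr: "real_of_int c = (-1)^k" unfolding c_def by simp
  have "real_of_int c * (of_int n * e - of_int m) = of_int (c*n) * e - of_int (c*m)"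
    by (simp add: algebra_simps)
  also have "\<dots> = of_int u0 * (of_int Q1 * e - of_int p1) + of_int v0 * (of_int Q2 * e - of_int p2)"
    unfolding hn[symmetric] hm[symmetric] by (simp add: algebra_simps)
  also have "\<dots> = real_of_int c * (of_int u0 * PP e (Suc k) - of_int v0 * PP e (Suc (Suc k)))"
    unfolding D cr by (simp add: algebra_simps)
  finally have eq: "real_of_int c * (of_int n * e - of_int m) = real_of_int c * (of_int u0 * PP e (Suc k) - of_int v0 * PP e (Suc (Suc k)))" .
  have "real_of_int c \<noteq> 0" using cc by auto
  then have eq2: "of_int n * e - of_int m = of_int u0 * PP e (Suc k) - of_int v0 * PP e (Suc (Suc k))"
    using eq by simp
  have nn: "n = (c*u0) * Q1 + (c*v0) * Q2"
  proof -
    have "c * (c * n) = n" using cc by (simp add: mult.assoc[symmetric])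
    then show ?thesis using hn by (metis distrib_left mult.assoc)
  qed
  have cabs: "\<bar>real_of_int c\<bar> = 1" unfolding cr by simp
  have "PP e (Suc k) \<le> \<bar>real_of_int (c*u0) * PP e (Suc k) - real_of_int (c*v0) * PP e (Suc (Suc k))\<bar>"
  proof (rule sign_arg[OF _ _ _ _ n(1) _ nn])
    show "0 \<le> Q1" "1 \<le> Q2" "n < Q2"
      using qq_props[OF assms(1-3), of k] qq_props[OF assms(1-3), of "Suc k"] n unfolding Q1_def Q2_def by auto
    show "0 < PP e (Suc k)" "0 < PP e (Suc (Suc k))" using PP_pos[OF assms(1-3)] by auto
  qed
  also have "\<dots> = \<bar>real_of_int c\<bar> * \<bar>of_int u0 * PP e (Suc k) - of_int v0 * PP e (Suc (Suc k))\<bar>"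
    by (simp add: abs_mult[symmetric] algebra_simps)
  also have "\<dots> = \<bar>of_int n * e - of_int m\<bar>" using cabs eq2 by simp
  finally show ?thesis .
qed

lemma choose_k:
  assumes "0 < e" "e < 1" "e \<notin> \<rat>" "1 \<le> N"
  shows "\<exists>k. qq e (Suc k) \<le> N \<and> N < qq e (Suc (Suc k))"
proof -
  have ex: "\<exists>k. N < qq e (Suc (Suc k))"
  proof -
    have "int (nat N + 2) \<le> qq e (Suc (Suc (nat N + 2))) + 1" using qq_props[OF assms(1-3)] by blast
    then show ?thesis using assms(4) by (intro exI[of _ "nat N + 2"]) linarith
  qed
  define k where "k = (LEAST k. N < qq e (Suc (Suc k)))"
  have k1: "N < qq e (Suc (Suc k))" unfolding k_def using ex by (rule LeastI_ex)
  have "qq e (Suc k) \<le> N"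
  proof (cases k)
    case 0 then show ?thesis using assms by simp
  next
    case (Suc k')
    have "\<not> N < qq e (Suc (Suc k'))" using not_less_Least[of k' "\<lambda>k. N < qq e (Suc (Suc k))"] Suc k_def by simp
    then show ?thesis using Suc by simp
  qed
  then show ?thesis using k1 by blast
qed

lemma cover_up:
  fixes F :: "int set" and e g y :: real
  assumes "finite F" "F \<noteq> {}"
    and succ: "\<And>n m. n \<in> F \<Longrightarrow> \<exists>n'\<in>F. \<exists>m'::int. \<exists>t. 0 < t \<and> t \<le> g \<and> of_int n' * e + of_int m' = of_int n * e + of_int m + t"
  shows "\<exists>n\<in>F. \<exists>m::int. y < of_int n * e + of_int m \<and> of_int n * e + of_int m \<le> y + g"
proof -
  define f where "f n = of_int n * e + of_int \<lfloor>y - of_int n * e\<rfloor>" for n :: int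
  define M where "M = Max (f ` F)"
  have "M \<in> f ` F" unfolding M_def using assms by simp
  then obtain n0 where n0: "n0 \<in> F" "M = f n0" by auto
  have fle: "f n \<le> M" if "n \<in> F" for n unfolding M_def using assms that by simp
  have My: "M \<le> y" unfolding n0 f_def by linarith
  obtain n' m' t where nm: "n' \<in> F" "0 < t" "t \<le> g" "of_int n' * e + of_int m' = M + t"
    using succ[OF n0(1), of "\<lfloor>y - of_int n0 * e\<rfloor>"] unfolding n0 f_def by auto
  have "y < M + t"
  proof (rule ccontr)
    assume "\<not> y < M + t"
    then have "of_int m' \<le> y - of_int n' * e" using nm by linarith
    then have "m' \<le> \<lfloor>y - of_int n' * e\<rfloor>" by (simp add: le_floor_iff)
    then have "M + t \<le> f n'" unfolding f_def using nm by simp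
    then show False using fle[OF nm(1)] nm by linarith
  qed
  then show ?thesis using nm My by (intro bexI[OF _ nm(1)] exI[of _ m']) auto
qed

lemma cover_down:
  fixes F :: "int set" and e g y :: real
  assumes "finite F" "F \<noteq> {}"
    and succ: "\<And>n m. n \<in> F \<Longrightarrow> \<exists>n'\<in>F. \<exists>m'::int. \<exists>t. 0 < t \<and> t \<le> g \<and> of_int n' * e + of_int m' = of_int n * e + of_int m - t"
  shows "\<exists>n\<in>F. \<exists>m::int. y < of_int n * e + of_int m \<and> of_int n * e + of_int m \<le> y + g"
proof -
  define f where "f n = of_int n * e + of_int (\<lfloor>y + g - of_int n * e\<rfloor> + 1)" for n :: int
  define M where "M = Min (f ` F)"
  have "M \<in> f ` F" unfolding M_def using assms by simp
  then obtain n0 where n0: "n0 \<in> F" "M = f n0" by auto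
  have fle: "M \<le> f n" if "n \<in> F" for n unfolding M_def using assms that by simp
  have My: "y + g < M" unfolding n0 f_def by linarith
  obtain n' m' t where nm: "n' \<in> F" "0 < t" "t \<le> g" "of_int n' * e + of_int m' = M - t"
    using succ[OF n0(1), of "\<lfloor>y + g - of_int n0 * e\<rfloor> + 1"] unfolding n0 f_def by auto
  have "M - t \<le> y + g"
  proof (rule ccontr)
    assume "\<not> M - t \<le> y + g"
    then have "y + g - of_int n' * e < of_int m'" using nm by linarith
    then have "\<lfloor>y + g - of_int n' * e\<rfloor> + 1 \<le> m'" by linarith
    then have "f n' \<le> M - t" unfolding f_def using nm by simp
    then show False using fle[OF nm(1)] nm by linarith
  qed
  then show ?thesis using nm My by (intro bexI[OF _ nm(1)] exI[of _ m']) auto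
qed

lemma cover:
  assumes "0 < e" "e < 1" "e \<notin> \<rat>" and L: "PP e k + PP e (Suc k) \<le> L"
  shows "\<exists>n m::int. 0 \<le> n \<and> n < qq e (Suc k) \<and> y < of_int n * e + of_int m \<and> of_int n * e + of_int m \<le> y + L"
proof -
  define Q0 where "Q0 = qq e k"
  define Q1 where "Q1 = qq e (Suc k)"
  define g where "g = PP e k + PP e (Suc k)"
  define s :: real where "s = (-1)^(k+1)"
  have q: "0 \<le> Q0" "Q0 \<le> Q1" "1 \<le> Q1" using qq_props[OF assms(1-3), of k] unfolding Q0_def Q1_def by auto
  have P: "0 < PP e k" "0 < PP e (Suc k)" using PP_pos[OF assms(1-3)] by auto
  have D0: "of_int Q0 * e - of_int (pp e k) = s * PP e k"
   and D1: "of_int Q1 * e - of_int (pp e (Suc k)) = - s * PP e (Suc k)"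
    using D_eq[OF assms(1-3), of k] unfolding Q0_def Q1_def s_def by auto
  have succ: "\<exists>n'\<in>{0..<Q1}. \<exists>m'::int. \<exists>t. 0 < t \<and> t \<le> g \<and> of_int n' * e + of_int m' = of_int n * e + of_int m + s * t"
    if "n \<in> {0..<Q1}" for n m
  proof (cases "n + Q0 < Q1")
    case True
    have "of_int (n + Q0) * e + of_int (m - pp e k) = of_int n * e + of_int m + s * PP e k"
      using D0 by (simp add: algebra_simps)
    then show ?thesis using True that q P unfolding g_def
      by (intro bexI[of _ "n + Q0"] exI[of _ "m - pp e k"] exI[of _ "PP e k"]) auto
  next
    case False
    have "of_int (n + Q0 - Q1) * e + of_int (m - pp e k + pp e (Suc k)) = of_int n * e + of_int m + s * g"
      using D0 D1 unfolding g_def by (simp add: algebra_simps)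
    then show ?thesis using False that q P unfolding g_def
      by (intro bexI[of _ "n + Q0 - Q1"] exI[of _ "m - pp e k + pp e (Suc k)"] exI[of _ "g"]) (auto simp: g_def)
  qed
  have gp: "0 < g" using P unfolding g_def by simp
  have "\<exists>n\<in>{0..<Q1}. \<exists>m::int. y < of_int n * e + of_int m \<and> of_int n * e + of_int m \<le> y + g"
  proof (cases "even k")
    case True
    then have "s = -1" unfolding s_def by simp
    then show ?thesis using q by (intro cover_down[where g=g]) (use succ in auto)
  next
    case False
    then have "s = 1" unfolding s_def by simp
    then show ?thesis using q by (intro cover_up[where g=g]) (use succ in auto)
  qed
  then show ?thesis using L unfolding g_def Q1_def by force
qed

lemma gap_bound:
  assumes "0 < e" "e < 1" "e \<notin> \<rat>"
  shows "PP e k + PP e (Suc k) < (of_int (cf_quot e (Suc k)) + 2) * PP e (Suc k)"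
proof -
  have r: "0 < cf_rem e k" "0 < cf_rem e (Suc k)" "cf_rem e (Suc k) < 1"
    using rem_props[OF assms, of k] rem_props[OF assms, of "Suc k"] by blast+
  have inv: "1 / cf_rem e k = of_int (cf_quot e (Suc k)) + cf_rem e (Suc k)" by (rule inv_eq[OF assms])
  have P1: "PP e (Suc k) = PP e k * cf_rem e k" by (simp add: PP_def)
  have "PP e k = PP e (Suc k) * (1 / cf_rem e k)" using P1 r by simp
  also have "\<dots> < PP e (Suc k) * (of_int (cf_quot e (Suc k)) + 1)"
    unfolding inv using r PP_pos[OF assms, of "Suc k"] by (intro mult_strict_left_mono) auto
  finally show ?thesis by (simp add: algebra_simps)
qed



definition tw :: "letter \<Rightarrow> nat" where "tw c = (case c of A \<Rightarrow> 1 | B \<Rightarrow> 2 | C \<Rightarrow> 1)"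
definition sw :: "letter \<Rightarrow> int" where "sw c = (case c of A \<Rightarrow> 1 | B \<Rightarrow> 1 | C \<Rightarrow> 0)"

lemma T_step:
  assumes "0 < e" "e < 1" "max e (1 - e) < l" "l < 1" "0 \<le> x" "x < l"
  shows "T3 e l x = x - real (tw (letter_of e l x)) * e + of_int (sw (letter_of e l x))"
    "0 \<le> T3 e l x" "T3 e l x < l"
  using assms unfolding T3_def letter_of_def tw_def sw_def by auto

lemma orbit_in:
  assumes "0 < e" "e < 1" "max e (1 - e) < l" "l < 1" "0 \<le> x" "x < l"
  shows "0 \<le> (T3 e l ^^ i) x \<and> (T3 e l ^^ i) x < l"
  by (induction i) (use assms T_step[OF assms(1-4)] in auto)

lemma floor_small:
  assumes "0 < e" "e < 1" "max e (1 - e) < l" "l < 1" "0 \<le> x" "x < l"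
    and "n < tw (letter_of e l x)"
  shows "\<lfloor>x - real n * e\<rfloor> = (if n = 0 then 0 else -1)"
proof (cases "n = 0")
  case True then show ?thesis using assms by (simp add: floor_eq_iff)
next
  case False
  then have "letter_of e l x = B" "n = 1" using assms(7) unfolding tw_def
    by (auto split: letter.splits)
  then have "l - 1 + e \<le> x" "x < e" using assms unfolding letter_of_def by (auto split: if_splits)
  then show ?thesis using \<open>n = 1\<close> assms by (simp add: floor_eq_iff)
qed

lemma itin_shift:
  assumes "\<forall>i<length (c # ws). letter_of e l ((T3 e l ^^ i) x) = (c # ws) ! i"
  shows "letter_of e l x = c" "\<forall>i<length ws. letter_of e l ((T3 e l ^^ i) (T3 e l x)) = ws ! i"
proof -
  show "letter_of e l x = c" using assms[rule_format, of 0] by simp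
  show "\<forall>i<length ws. letter_of e l ((T3 e l ^^ i) (T3 e l x)) = ws ! i"
  proof (intro allI impI)
    fix i assume "i < length ws"
    then have "letter_of e l ((T3 e l ^^ Suc i) x) = (c # ws) ! Suc i" using assms by auto
    then show "letter_of e l ((T3 e l ^^ i) (T3 e l x)) = ws ! i"
      by (simp add: funpow_Suc_right del: funpow.simps)
  qed
qed

lemma itin_disp:
  assumes "0 < e" "e < 1" "max e (1 - e) < l" "l < 1"
  shows "0 \<le> x \<Longrightarrow> x < l \<Longrightarrow> \<forall>i<length ws. letter_of e l ((T3 e l ^^ i) x) = ws ! i \<Longrightarrow>
    (T3 e l ^^ length ws) x = x - real (sum_list (map tw ws)) * e + of_int (sum_list (map sw ws))"
proof (induction ws arbitrary: x)
  case Nil then show ?case by simp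
next
  case (Cons c ws)
  note sh = itin_shift[OF Cons.prems(3)]
  have T: "T3 e l x = x - real (tw c) * e + of_int (sw c)" "0 \<le> T3 e l x" "T3 e l x < l"
    using T_step[OF assms Cons.prems(1,2)] sh(1) by auto
  have "(T3 e l ^^ length (c # ws)) x = (T3 e l ^^ length ws) (T3 e l x)"
    by (simp add: funpow_Suc_right del: funpow.simps)
  also have "\<dots> = T3 e l x - real (sum_list (map tw ws)) * e + of_int (sum_list (map sw ws))"
    using Cons.IH[OF T(2,3) sh(2)] .
  finally show ?case using T(1) by (simp add: algebra_simps)
qed

lemma itin_floor:
  assumes "0 < e" "e < 1" "max e (1 - e) < l" "l < 1"
  shows "0 \<le> x \<Longrightarrow> x < l \<Longrightarrow> 0 \<le> x' \<Longrightarrow> x' < l \<Longrightarrow>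
    \<forall>i<length ws. letter_of e l ((T3 e l ^^ i) x) = ws ! i \<Longrightarrow>
    \<forall>i<length ws. letter_of e l ((T3 e l ^^ i) x') = ws ! i \<Longrightarrow>
    n \<le> sum_list (map tw ws) \<Longrightarrow> \<lfloor>x - real n * e\<rfloor> = \<lfloor>x' - real n * e\<rfloor>"
proof (induction ws arbitrary: x x' n)
  case Nil
  have "\<lfloor>x\<rfloor> = 0" "\<lfloor>x'\<rfloor> = 0" using Nil.prems(1-4) assms by (simp_all add: floor_eq_iff)
  then show ?case using Nil.prems(7) by simp
next
  case (Cons c ws)
  note sh = itin_shift[OF Cons.prems(5)]
  note sh' = itin_shift[OF Cons.prems(6)]
  have T: "T3 e l x = x - real (tw c) * e + of_int (sw c)" "0 \<le> T3 e l x" "T3 e l x < l"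
    using T_step[OF assms Cons.prems(1,2)] sh(1) by auto
  have T': "T3 e l x' = x' - real (tw c) * e + of_int (sw c)" "0 \<le> T3 e l x'" "T3 e l x' < l"
    using T_step[OF assms Cons.prems(3,4)] sh'(1) by auto
  show ?case
  proof (cases "n < tw c")
    case True
    then show ?thesis using floor_small[OF assms Cons.prems(1,2), of n] floor_small[OF assms Cons.prems(3,4), of n]
      sh(1) sh'(1) by simp
  next
    case False
    define n' where "n' = n - tw c"
    have n: "n = n' + tw c" "n' \<le> sum_list (map tw ws)" using False Cons.prems(7) unfolding n'_def by auto
    have IH: "\<lfloor>T3 e l x - real n' * e\<rfloor> = \<lfloor>T3 e l x' - real n' * e\<rfloor>"
      using Cons.IH[OF T(2,3) T'(2,3) sh(2) sh'(2) n(2)] .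
    have a: "x - real n * e = (T3 e l x - real n' * e) - of_int (sw c)" using T(1) n(1) by (simp add: algebra_simps)
    have b: "x' - real n * e = (T3 e l x' - real n' * e) - of_int (sw c)" using T'(1) n(1) by (simp add: algebra_simps)
    show ?thesis unfolding a b using IH by (simp add: floor_diff_of_int)
  qed
qed

lemma pw_len: "length (power_word w j) = j * length w"
  unfolding power_word_def by (induction j) auto

lemma pw_nth: "i < j \<Longrightarrow> s < length w \<Longrightarrow> power_word w j ! (i * length w + s) = w ! s"
proof (induction j arbitrary: i)
  case 0 then show ?case by simp
next
  case (Suc j)
  have pw: "power_word w (Suc j) = w @ power_word w j" unfolding power_word_def by simp
  show ?case
  proof (cases i)
    case 0 then show ?thesis using pw Suc by (simp add: nth_append)
  next
    case (Suc i')
    have "power_word w (Suc j) ! (i * length w + s) = power_word w j ! (i' * length w + s)"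
      unfolding pw Suc by (simp add: nth_append algebra_simps)
    then show ?thesis using Suc.IH[of i'] Suc.prems \<open>i = Suc i'\<close> by simp
  qed
qed

lemma tw_len: "length ws \<le> sum_list (map tw ws)"
  by (induction ws) (auto simp: tw_def split: letter.splits)

theorem corollary1:
  fixes e l x0 :: real and w :: "letter list" and j :: nat
  assumes "0 < e" "e < 1" "e \<notin> \<rat>"
    and "max e (1 - e) < l" "l < 1"
    and "0 \<le> x0" "x0 < l"
    and "w \<noteq> []"
    and "is_factor (power_word w j) (iet_word e l x0)"
  shows "ereal (real j) \<le> 2 + (SUP n\<in>UNIV. ereal (real_of_int (cf_quot e n)))"
proof -
  have P: "0 < e" "e < 1" "max e (1 - e) < l" "l < 1" using assms by auto
  have E: "0 < e" "e < 1" "e \<notin> \<rat>" using assms by auto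
  define SUPa where "SUPa = (SUP n\<in>UNIV. ereal (real_of_int (cf_quot e n)))"
  have supa: "ereal (real_of_int (cf_quot e n)) \<le> SUPa" for n
    unfolding SUPa_def by (rule SUP_upper) simp
  have q0: "cf_quot e 0 = 0" using assms(1,2) by (simp add: cf_quot_def floor_eq_iff)
  have sup0: "0 \<le> SUPa" using supa[of 0] q0 by (simp add: zero_ereal_def)
  have two: "2 \<le> 2 + SUPa" using add_left_mono[OF sup0, of 2] by simp
  show ?thesis
  proof (cases "j \<le> 2")
    case True
    then have "ereal (real j) \<le> 2" by (simp add: numeral_eq_ereal)
    then show ?thesis using two unfolding SUPa_def by (rule order_trans)
  next
    case False
    define T where "T = T3 e l"
    define p where "p = length w"
    obtain k0 where fac: "\<forall>i<length (power_word w j). iet_word e l x0 (k0 + i) = power_word w j ! i"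
      using assms(9) unfolding is_factor_def by blast
    define y where "y i = (T ^^ (k0 + i * p)) x0" for i
    have yin: "0 \<le> y i" "y i < l" for i
      using orbit_in[OF P assms(6,7), of "k0 + i * p"] unfolding y_def T_def by auto
    have itin: "\<forall>s<length w. letter_of e l ((T3 e l ^^ s) (y i)) = w ! s" if "i < j" for i
    proof (intro allI impI)
      fix s assume s: "s < length w"
      have "(T3 e l ^^ s) (y i) = (T3 e l ^^ (s + (k0 + i * p))) x0"
        unfolding y_def T_def by (simp add: funpow_add)
      also have "s + (k0 + i * p) = k0 + (i * p + s)" by simp
      finally have "(T3 e l ^^ s) (y i) = (T3 e l ^^ (k0 + (i * p + s))) x0" .
      then have "letter_of e l ((T3 e l ^^ s) (y i)) = iet_word e l x0 (k0 + (i * p + s))"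
        unfolding iet_word_def by simp
      also have "\<dots> = power_word w j ! (i * p + s)"
      proof -
        have "i * p + s < j * p"
        proof -
          have "Suc i \<le> j" using that by simp
          then have "Suc i * p \<le> j * p" by (rule mult_right_mono) simp
          then show ?thesis using s p_def by simp
        qed
        then show ?thesis using fac pw_len[of w j] p_def by auto
      qed
      also have "\<dots> = w ! s" using pw_nth[OF that s] p_def by simp
      finally show "letter_of e l ((T3 e l ^^ s) (y i)) = w ! s" .
    qed
    define N where "N = sum_list (map tw w)"
    define S where "S = sum_list (map sw w)"
    define \<delta> where "\<delta> = of_int S - real N * e"
    have step: "y (Suc i) = y i + \<delta>" if "Suc i < j" for i
    proof -
      have eq: "k0 + Suc i * p = p + (k0 + i * p)" by simp
      have "y (Suc i) = (T3 e l ^^ (p + (k0 + i * p))) x0" unfolding y_def T_def eq ..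
      also have "\<dots> = (T3 e l ^^ length w) (y i)"
        unfolding y_def T_def p_def by (simp only: funpow_add o_apply)
      also have "\<dots> = y i + \<delta>"
        using itin_disp[OF P yin(1)[of i] yin(2)[of i] itin[of i]] that unfolding \<delta>_def N_def S_def by simp
      finally show ?thesis .
    qed
    have lin: "i < j \<Longrightarrow> y i = y 0 + real i * \<delta>" for i
    proof (induction i)
      case 0 then show ?case by simp
    next
      case (Suc i) then show ?case using step[of i] by (simp add: algebra_simps)
    qed
    define z where "z = y (j - 1)"
    have z: "z = y 0 + real (j - 1) * \<delta>" unfolding z_def using lin[of "j - 1"] False by simp
    have fl: "\<lfloor>y 0 - real n * e\<rfloor> = \<lfloor>z - real n * e\<rfloor>" if "n \<le> N" for n
      unfolding z_def
      using itin_floor[OF P yin(1)[of 0] yin(2)[of 0] yin(1)[of "j-1"] yin(2)[of "j-1"] itin[of 0] itin[of "j-1"]]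
        False that N_def by simp
    have N1: "1 \<le> N" using tw_len[of w] assms(8) N_def by (cases w) auto
    obtain k where kq: "qq e (Suc k) \<le> int N" "int N < qq e (Suc (Suc k))"
      using choose_k[OF E, of "int N"] N1 by auto
    have ba: "PP e (Suc k) \<le> \<bar>\<delta>\<bar>"
    proof -
      have "PP e (Suc k) \<le> \<bar>of_int (int N) * e - of_int S\<bar>"
        by (rule best_approx[OF E]) (use N1 kq in auto)
      also have "\<dots> = \<bar>\<delta>\<bar>" unfolding \<delta>_def by simp
      finally show ?thesis .
    qed
    have dpos: "0 < \<bar>\<delta>\<bar>" using ba PP_pos[OF E, of "Suc k"] by linarith
    define L where "L = real (j - 1) * \<bar>\<delta>\<bar>"
    define lo where "lo = min (y 0) z"
    define hi where "hi = max (y 0) z"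
    have hiL: "hi = lo + L"
    proof (cases "0 \<le> \<delta>")
      case True
      have "0 \<le> real (j - 1) * \<delta>" using True by simp
      then show ?thesis unfolding hi_def lo_def L_def z using True by simp
    next
      case False
      have "real (j - 1) * \<delta> \<le> 0" using False by (simp add: mult_nonneg_nonpos)
      then show ?thesis unfolding hi_def lo_def L_def z using False by simp
    qed
    have flh: "\<lfloor>lo - real n * e\<rfloor> = \<lfloor>hi - real n * e\<rfloor>" if "n \<le> N" for n
      using fl[OF that] unfolding lo_def hi_def by (cases "y 0 \<le> z") auto
    have nocov: "\<not> PP e k + PP e (Suc k) \<le> L"
    proof
      assume "PP e k + PP e (Suc k) \<le> L"
      from cover[OF E this, of lo] obtain n m :: int where nm: "0 \<le> n" "n < qq e (Suc k)"
        "lo < of_int n * e + of_int m" "of_int n * e + of_int m \<le> lo + L" by blast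
      have nN: "nat n \<le> N" using nm(1,2) kq(1) by linarith
      have rn: "real (nat n) = of_int n" using nm(1) by simp
      have "\<lfloor>lo - real (nat n) * e\<rfloor> < m" using nm(3) rn by (simp add: floor_less_iff)
      moreover have "m \<le> \<lfloor>hi - real (nat n) * e\<rfloor>" using nm(4) rn hiL by (simp add: le_floor_iff)
      ultimately show False using flh[OF nN] by simp
    qed
    define a where "a = cf_quot e (Suc k)"
    have "L < (of_int a + 2) * PP e (Suc k)" using nocov gap_bound[OF E, of k] unfolding a_def by linarith
    also have "\<dots> \<le> (of_int a + 2) * \<bar>\<delta>\<bar>"
    proof (rule mult_left_mono[OF ba])
      show "0 \<le> real_of_int a + 2" using quot_pos[OF E, of k] unfolding a_def by simp
    qed
    finally have "real (j - 1) < of_int a + 2" unfolding L_def using dpos by simp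
    then have "real_of_int (int j) < real_of_int (a + 3)" using False by (simp add: of_nat_diff)
    then have "int j \<le> a + 2" by linarith
    then have "real j \<le> real_of_int a + 2" by linarith
    then have "ereal (real j) \<le> ereal (real_of_int a) + 2" by (simp add: numeral_eq_ereal)
    also have "\<dots> \<le> SUPa + 2" using add_right_mono[OF supa[of "Suc k"], of 2] unfolding a_def .
    finally show ?thesis unfolding SUPa_def by (simp add: add.commute)
  qed
qed

end
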